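(* Let $g\in\mathrm{Lip}(\mathbb{R})$ satisfy $g(x)\ge g(-1)$ for all $x\in\mathbb{R}$ and $g(x)\ge x+1+g(-1)$ for all $x\in[-1,0]$. For $\varepsilon>0$ let $u^\varepsilon$ be the viscosity solution of $u^\varepsilon_t+u^\varepsilon_x=\varepsilon u^\varepsilon_{xx}$ in $\mathbb{R}\times(0,\infty)$, $u^\varepsilon(\cdot,0)=g$, and let $u$ be the viscosity solution of $u_t+u_x=0$ in $\mathbb{R}\times(0,\infty)$, $u(\cdot,0)=g$. Then for every $\varepsilon\in(0,\tfrac14)$, \[ |u^\varepsilon(0,1)-u(0,1)|=u^\varepsilon(0,1)-g(-1)\ge\frac{\mathrm{e}-1}{\sqrt{\pi}\,\mathrm{e}}\sqrt{\varepsilon}. \] *)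

theory Defs
  imports "HOL-Analysis.Analysis"
begin

text \<open>The arguments phix, phit, phixx
  are the partial derivatives of phi (they are uniquely determined).\<close>

definition test_fun ::
  "(real \<times> real \<Rightarrow> real) \<Rightarrow> (real \<times> real \<Rightarrow> real) \<Rightarrow> (real \<times> real \<Rightarrow> real)
     \<Rightarrow> (real \<times> real \<Rightarrow> real) \<Rightarrow> bool" where
  "test_fun phi phix phit phixx \<longleftrightarrow>
     (\<forall>x t. ((\<lambda>y. phi (y, t)) has_real_derivative phix (x, t)) (at x)) \<and>
     (\<forall>x t. ((\<lambda>s. phi (x, s)) has_real_derivative phit (x, t)) (at t)) \<and>
     (\<forall>x t. ((\<lambda>y. phix (y, t)) has_real_derivative phixx (x, t)) (at x)) \<and>
     continuous_on UNIV phix \<and> continuous_on UNIV phit \<and> continuous_on UNIV phixx"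

definition half_plane :: "(real \<times> real) set" where
  "half_plane = {p. snd p > 0}"

definition loc_max_on :: "(real \<times> real) set \<Rightarrow> (real \<times> real \<Rightarrow> real) \<Rightarrow> real \<times> real \<Rightarrow> bool" where
  "loc_max_on S w p \<longleftrightarrow> (\<exists>r>0. \<forall>q\<in>S. dist q p < r \<longrightarrow> w q \<le> w p)"

definition loc_min_on :: "(real \<times> real) set \<Rightarrow> (real \<times> real \<Rightarrow> real) \<Rightarrow> real \<times> real \<Rightarrow> bool" where
  "loc_min_on S w p \<longleftrightarrow> (\<exists>r>0. \<forall>q\<in>S. dist q p < r \<longrightarrow> w q \<ge> w p)"

text \<open>Solutions are taken in the standard uniqueness class of functions uniformly
  continuous on R \<times> [0,\<infinity>).\<close>
definition visc_sub :: "real \<Rightarrow> (real \<times> real \<Rightarrow> real) \<Rightarrow> bool" where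
  "visc_sub eps u \<longleftrightarrow>
     (\<forall>phi phix phit phixx p. test_fun phi phix phit phixx \<and> p \<in> half_plane \<and>
        loc_max_on half_plane (\<lambda>q. u q - phi q) p \<longrightarrow>
        phit p + phix p - eps * phixx p \<le> 0)"

definition visc_super :: "real \<Rightarrow> (real \<times> real \<Rightarrow> real) \<Rightarrow> bool" where
  "visc_super eps u \<longleftrightarrow>
     (\<forall>phi phix phit phixx p. test_fun phi phix phit phixx \<and> p \<in> half_plane \<and>
        loc_min_on half_plane (\<lambda>q. u q - phi q) p \<longrightarrow>
        phit p + phix p - eps * phixx p \<ge> 0)"

definition visc_solution :: "real \<Rightarrow> (real \<Rightarrow> real) \<Rightarrow> (real \<times> real \<Rightarrow> real) \<Rightarrow> bool" where
  "visc_solution eps g u \<longleftrightarrow>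
     uniformly_continuous_on {p. snd p \<ge> 0} u \<and>
     (\<forall>x. u (x, 0) = g x) \<and>
     visc_sub eps u \<and> visc_super eps u"

end

theory Submission
  imports Defs "HOL-Probability.Distributions" "HOL-Real_Asymp.Real_Asymp"
begin

definition gI :: "real \<Rightarrow> real" where
  "gI x = (LBINT y=0..x. exp (- (y\<^sup>2)))"

lemma gI_deriv: "(gI has_real_derivative exp (- (x\<^sup>2))) (at x)"
proof -
  have "(at x within {min 0 (x - 1)..max 0 (x + 1)}) = at x"
    by (intro at_within_interior) auto
  moreover have "min 0 (x - 1) \<le> x" "x \<le> max 0 (x + 1)"
    by auto
  moreover have "continuous_on {min 0 (x - 1)..max 0 (x + 1)} (\<lambda>y::real. exp (- (y\<^sup>2)))"
    by (intro continuous_intros)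
  ultimately show ?thesis
    using interval_integral_FTC2[of "min 0 (x - 1)" 0 "max 0 (x + 1)" "\<lambda>y. exp (- (y\<^sup>2))" x]
    by (auto simp: gI_def[abs_def] zero_ereal_def
                   has_real_derivative_iff_has_vector_derivative
             split del: if_split)
qed

lemma gI_mono: "x \<le> y \<Longrightarrow> gI x \<le> gI y"
  by (rule DERIV_nonneg_imp_nondecreasing[of x y gI]) (auto intro!: exI gI_deriv)

lemma gI_odd: "gI (- x) = - gI x"
proof -
  have "gI (-x) = (LBINT y=ereal x..ereal 0. exp (- ((-y)\<^sup>2)))"
    unfolding gI_def using interval_integral_reflect[of "ereal 0" "ereal (-x)" "\<lambda>y. exp (- (y\<^sup>2))"]
    by (simp add: zero_ereal_def)
  also have "\<dots> = - gI x"
    unfolding gI_def by (subst interval_integral_endpoints_reverse) (simp add: zero_ereal_def)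
  finally show ?thesis .
qed

lemma gI_lim: "(gI \<longlongrightarrow> sqrt pi / 2) at_top"
proof -
  have hb: "has_bochner_integral lborel (\<lambda>x::real. indicator {0..} x *\<^sub>R exp (- x\<^sup>2)) (sqrt pi / 2)"
    by (rule gaussian_moment_0)
  have si: "set_integrable lborel {0..} (\<lambda>x::real. exp (- x\<^sup>2))"
    using hb unfolding set_integrable_def by (auto simp: integrable.simps)
  have val: "(LINT (x::real):{0..}|lborel. exp (- x\<^sup>2)) = sqrt pi / 2"
    using hb unfolding set_lebesgue_integral_def by (rule has_bochner_integral_integral_eq)
  have "((\<lambda>b::real. LINT x:{0..b}|lborel. exp (- x\<^sup>2)) \<longlongrightarrow> (LINT (x::real):{0..}|lborel. exp (- x\<^sup>2))) at_top"
    using si by (intro tendsto_set_lebesgue_integral_at_top) auto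
  then have "((\<lambda>b::real. LINT x:{0..b}|lborel. exp (- x\<^sup>2)) \<longlongrightarrow> sqrt pi / 2) at_top"
    using val by simp
  moreover have "eventually (\<lambda>b. (LINT (x::real):{0..b}|lborel. exp (- x\<^sup>2)) = gI b) at_top"
    using eventually_ge_at_top[of "0::real"]
    by eventually_elim (simp add: gI_def interval_integral_Icc[symmetric] zero_ereal_def)
  ultimately show ?thesis by (rule Lim_transform_eventually)
qed

lemma gI_le: "gI x \<le> sqrt pi / 2"
proof (rule tendsto_lowerbound[OF gI_lim])
  show "\<forall>\<^sub>F y in at_top. gI x \<le> gI y"
    using eventually_ge_at_top[of x] by eventually_elim (rule gI_mono)
qed simp

lemma gI_ge: "- (sqrt pi / 2) \<le> gI x"
  using gI_le[of "-x"] gI_odd[of x] by simp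

lemma exp_sq_deriv: "((\<lambda>y. exp (- (y\<^sup>2))) has_real_derivative exp (- (y\<^sup>2)) * (- (2 * y))) (at y)"
  by (auto intro!: derivative_eq_intros)

lemma mills_pos:
  assumes "0 < x"
  shows "sqrt pi / 2 - gI x \<le> exp (- (x\<^sup>2)) / (2 * x)"
proof -
  define k where "k y = sqrt pi / 2 - gI y - exp (- (y\<^sup>2)) / (2 * y)" for y
  have dk: "(k has_real_derivative exp (- (y\<^sup>2)) / (2 * y\<^sup>2)) (at y)" if "0 < y" for y
  proof -
    have d2: "((\<lambda>y::real. 2 * y) has_real_derivative 2) (at y)"
      using DERIV_cmult[OF DERIV_ident, of 2] by simp
    have "(k has_real_derivative (0 - exp (- (y\<^sup>2)) - ((exp (- (y\<^sup>2)) * (- (2 * y))) * (2 * y) - exp (- (y\<^sup>2)) * 2) / ((2 * y) * (2 * y)))) (at y)"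
      unfolding k_def[abs_def]
      by (intro DERIV_diff DERIV_const gI_deriv DERIV_divide exp_sq_deriv d2) (use that in simp)
    moreover have "\<And>e::real. (0 - e - ((e * (- (2 * y))) * (2 * y) - e * 2) / ((2 * y) * (2 * y)))
        = e / (2 * y\<^sup>2)"
      using that by (simp add: field_simps power2_eq_square)
    ultimately show ?thesis by simp
  qed
  have mono: "k x \<le> k y" if "x \<le> y" for y
    using that assms
    by (intro DERIV_nonneg_imp_nondecreasing[of x y k]) (auto intro!: exI dk)
  have l0: "((\<lambda>y::real. exp (- (y\<^sup>2)) / (2 * y)) \<longlongrightarrow> 0) at_top"
    by real_asymp
  have lim: "(k \<longlongrightarrow> sqrt pi / 2 - sqrt pi / 2 - 0) at_top"
    unfolding k_def[abs_def]
    by (intro tendsto_diff tendsto_const gI_lim l0)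
  have "k x \<le> 0"
  proof (rule tendsto_lowerbound[OF lim[simplified]])
    show "\<forall>\<^sub>F y in at_top. k x \<le> k y"
      using eventually_ge_at_top[of x] by eventually_elim (rule mono)
  qed simp
  then show ?thesis unfolding k_def by simp
qed

definition gN :: "real \<Rightarrow> real" where
  "gN x = 1/2 + gI x / sqrt pi"

definition gG :: "real \<Rightarrow> real" where
  "gG x = x * gN x + exp (- (x\<^sup>2)) / (2 * sqrt pi)"

lemma gN_deriv: "(gN has_real_derivative exp (- (x\<^sup>2)) / sqrt pi) (at x)"
proof -
  have "((\<lambda>x. 1/2 + gI x / sqrt pi) has_real_derivative 0 + exp (- (x\<^sup>2)) / sqrt pi) (at x)"
    by (intro DERIV_add DERIV_const DERIV_cdivide gI_deriv)
  then show ?thesis by (simp add: gN_def[abs_def])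
qed

lemma gN_mono: "x \<le> y \<Longrightarrow> gN x \<le> gN y"
  unfolding gN_def using gI_mono by (simp add: divide_right_mono)

lemma gN_bounds: "0 \<le> gN x" "gN x \<le> 1"
proof -
  have sp: "sqrt pi > 0" by simp
  have "- (sqrt pi / 2) \<le> gI x" "gI x \<le> sqrt pi / 2" using gI_ge gI_le by auto
  then have a: "- (1/2) \<le> gI x / sqrt pi" and b: "gI x / sqrt pi \<le> 1/2" using sp
    by (auto simp: divide_simps)
  show "0 \<le> gN x" unfolding gN_def using a by linarith
  show "gN x \<le> 1" unfolding gN_def using b by linarith
qed

lemma gG_deriv: "(gG has_real_derivative gN x) (at x)"
proof -
  have "(gG has_real_derivative (x * (exp (- (x\<^sup>2)) / sqrt pi) + 1 * gN x
          + exp (- (x\<^sup>2)) * (- (2 * x)) / (2 * sqrt pi))) (at x)"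
    unfolding gG_def[abs_def]
    by (intro DERIV_add DERIV_mult'[OF DERIV_ident gN_deriv] DERIV_cdivide exp_sq_deriv)
  moreover have "\<And>s e. s \<noteq> 0 \<Longrightarrow> x * (e / s) + 1 * gN x + e * (- (2 * x)) / (2 * s) = gN x"
    by (simp add: field_simps)
  ultimately show ?thesis by simp
qed

lemma gG_lower: "max x 0 \<le> gG x"
proof (cases "x > 0")
  case True
  have sp: "sqrt pi > 0" by simp
  have m: "x * (sqrt pi / 2 - gI x) \<le> exp (- (x\<^sup>2)) / 2"
    using mult_left_mono[OF mills_pos[OF True], of x] True by simp
  have "gG x - x = (exp (- (x\<^sup>2)) / 2 - x * (sqrt pi / 2 - gI x)) / sqrt pi"
    unfolding gG_def gN_def using sp by (simp add: field_simps)
  also have "\<dots> \<ge> 0" using m sp by simp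
  finally show ?thesis using True by simp
next
  case False
  have sp: "sqrt pi > 0" by simp
  show ?thesis
  proof (cases "x = 0")
    case True then show ?thesis by (simp add: gG_def)
  next
    case False
    with \<open>\<not> x > 0\<close> have xn: "0 < - x" by simp
    have m: "(- x) * (sqrt pi / 2 - gI (-x)) \<le> exp (- ((-x)\<^sup>2)) / 2"
      using mult_left_mono[OF mills_pos[OF xn], of "-x"] xn by simp
    have "gG x = (exp (- (x\<^sup>2)) / 2 - (- x) * (sqrt pi / 2 - gI (- x))) / sqrt pi"
      unfolding gG_def gN_def gI_odd using sp by (simp add: field_simps)
    also have "\<dots> \<ge> 0" using m sp by simp
    finally show ?thesis using xn by simp
  qed
qed

lemma gG_upper: "gG x \<le> max x 0 + 1"
proof -
  have sp: "sqrt pi \<ge> 1" using pi_gt3 by simp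
  have e: "exp (- (x\<^sup>2)) / (2 * sqrt pi) \<le> 1"
  proof -
    have "exp (- (x\<^sup>2)) \<le> 1" by simp
    also have "1 \<le> 2 * sqrt pi" using sp by linarith
    finally show ?thesis by simp
  qed
  have "x * gN x \<le> max x 0"
  proof (cases "x \<ge> 0")
    case True then show ?thesis using gN_bounds[of x] mult_left_le[of "gN x" x] by simp
  next
    case False then show ?thesis using gN_bounds[of x] mult_nonpos_nonneg[of x "gN x"] by simp
  qed
  then show ?thesis using e unfolding gG_def by linarith
qed


lemma sqmin_deriv: "((\<lambda>y::real. (min y 0)\<^sup>2) has_real_derivative 2 * min y 0) (at y)"
proof (cases "y < 0")
  case True
  have "((\<lambda>y::real. y\<^sup>2) has_real_derivative 2 * min y 0) (at y)"
    using True by (auto intro!: derivative_eq_intros)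
  then show ?thesis
    by (rule has_field_derivative_transform_within_open[OF _ open_lessThan]) (use True in auto)
next
  case False
  show ?thesis
  proof (cases "y > 0")
    case True
    have "((\<lambda>y::real. 0) has_real_derivative 2 * min y 0) (at y)" using True by simp
    then show ?thesis
      by (rule has_field_derivative_transform_within_open[OF _ open_greaterThan]) (use True in auto)
  next
    case False
    with \<open>\<not> y < 0\<close> have y0: "y = 0" by simp
    have "((\<lambda>h::real. ((min (0 + h) 0)\<^sup>2 - (min 0 0)\<^sup>2) / h) \<longlongrightarrow> 0) (at 0)"
    proof (rule Lim_null_comparison)
      show "\<forall>\<^sub>F h in at 0. norm (((min (0 + h) 0)\<^sup>2 - (min 0 0)\<^sup>2) / h) \<le> \<bar>h\<bar>"
      proof (rule always_eventually, rule allI)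
        fix h :: real
        show "norm (((min (0 + h) 0)\<^sup>2 - (min 0 0)\<^sup>2) / h) \<le> \<bar>h\<bar>"
          by (cases "h < 0") (auto simp: power2_eq_square abs_mult)
      qed
      show "((\<lambda>h::real. \<bar>h\<bar>) \<longlongrightarrow> 0) (at 0)"
        using tendsto_rabs[OF tendsto_ident_at[of "0::real" UNIV]] by simp
    qed
    then show ?thesis unfolding y0 DERIV_def by simp
  qed
qed

lemma sqmax_deriv: "((\<lambda>y::real. (max y 0)\<^sup>2) has_real_derivative 2 * max y 0) (at y)"
proof -
  have "((\<lambda>y::real. (min (- y) 0)\<^sup>2) has_real_derivative 2 * min (- y) 0 * (- 1)) (at y)"
    by (rule DERIV_chain2[OF sqmin_deriv]) (auto intro!: derivative_eq_intros)
  moreover have "(\<lambda>y::real. (min (- y) 0)\<^sup>2) = (\<lambda>y. (max y 0)\<^sup>2)"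
    by (rule ext) (simp add: power2_eq_square min_def max_def)
  moreover have "2 * min (- y) 0 * (- 1) = 2 * max y 0" by (simp add: min_def max_def)
  ultimately show ?thesis by metis
qed

definition wd :: "real \<Rightarrow> real \<Rightarrow> real" where
  "wd e s = 2 * sqrt (e * s)"

definition Wf :: "real \<Rightarrow> real \<Rightarrow> real \<Rightarrow> real" where
  "Wf e z s = wd e s * gG (z / wd e s)"

definition RR :: "real \<Rightarrow> real \<Rightarrow> real \<Rightarrow> real" where
  "RR e z s = (if 0 < s then Wf e z s else max z 0)"

lemma wd_pos: "0 < e \<Longrightarrow> 0 < s \<Longrightarrow> 0 < wd e s"
  by (simp add: wd_def)

lemma wd_deriv:
  assumes e: "0 < e" and sf: "(sf has_real_derivative s') (at t)" and pos: "0 < sf t"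
  shows "((\<lambda>t. wd e (sf t)) has_real_derivative (2 * e * s' / wd e (sf t))) (at t)"
proof -
  have ep: "0 < e * sf t" using e pos by simp
  have "((\<lambda>t. 2 * sqrt (e * sf t)) has_real_derivative 2 * (inverse (sqrt (e * sf t)) / 2 * (e * s'))) (at t)"
    by (intro DERIV_cmult DERIV_chain2[where g="\<lambda>t. e * sf t" and x=t, OF DERIV_real_sqrt[OF ep]] DERIV_cmult sf)
  moreover have "2 * (inverse (sqrt (e * sf t)) / 2 * (e * s')) = 2 * e * s' / wd e (sf t)"
    using ep by (simp add: wd_def field_simps)
  ultimately show ?thesis by (simp add: wd_def)
qed

lemma W_deriv:
  assumes e: "0 < e" and zf: "(zf has_real_derivative z') (at t)"
    and sf: "(sf has_real_derivative s') (at t)" and pos: "0 < sf t"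
  shows "((\<lambda>t. Wf e (zf t) (sf t)) has_real_derivative
     z' * gN (zf t / wd e (sf t)) + s' * (e * exp (- ((zf t / wd e (sf t))\<^sup>2)) / (sqrt pi * wd e (sf t)))) (at t)"
proof -
  define w where "w = wd e (sf t)"
  define \<xi> where "\<xi> = zf t / w"
  have wp: "0 < w" using wd_pos[OF e pos] by (simp add: w_def)
  have dw: "((\<lambda>t. wd e (sf t)) has_real_derivative (2 * e * s' / w)) (at t)"
    using wd_deriv[OF e sf pos] by (simp add: w_def)
  have dxi: "((\<lambda>t. zf t / wd e (sf t)) has_real_derivative (z' * w - zf t * (2 * e * s' / w)) / (w * w)) (at t)"
    using DERIV_divide[OF zf dw] wp by (simp add: w_def)
  have dG: "((\<lambda>t. gG (zf t / wd e (sf t))) has_real_derivative gN \<xi> * ((z' * w - zf t * (2 * e * s' / w)) / (w * w))) (at t)"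
    using DERIV_chain2[OF gG_deriv dxi] by (simp add: \<xi>_def w_def)
  have "((\<lambda>t. wd e (sf t) * gG (zf t / wd e (sf t))) has_real_derivative
      wd e (sf t) * (gN \<xi> * ((z' * w - zf t * (2 * e * s' / w)) / (w * w))) + (2 * e * s' / w) * gG (zf t / wd e (sf t))) (at t)"
    by (rule DERIV_mult'[OF dw dG])
  moreover have "wd e (sf t) * (gN \<xi> * ((z' * w - zf t * (2 * e * s' / w)) / (w * w))) + (2 * e * s' / w) * gG (zf t / wd e (sf t))
      = z' * gN \<xi> + s' * (e * exp (- (\<xi>\<^sup>2)) / (sqrt pi * w))"
  proof -
    have zf: "zf t = \<xi> * w" using wp by (simp add: \<xi>_def)
    have "gG \<xi> = \<xi> * gN \<xi> + exp (- (\<xi>\<^sup>2)) / (2 * sqrt pi)" by (simp add: gG_def)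
    moreover have wn: "w \<noteq> 0" using wp by simp
    ultimately show ?thesis unfolding zf
      by (simp add: w_def[symmetric] \<xi>_def[symmetric] field_simps)
  qed
  ultimately show ?thesis by (simp add: Wf_def[abs_def] w_def \<xi>_def)
qed

lemma N_deriv:
  assumes w: "0 < w"
  shows "((\<lambda>x. gN ((x + c) / w)) has_real_derivative exp (- (((x + c) / w)\<^sup>2)) / (sqrt pi * w)) (at x)"
proof -
  have "((\<lambda>x. (x + c) / w) has_real_derivative 1 / w) (at x)"
    using w by (auto intro!: derivative_eq_intros)
  from DERIV_chain2[OF gN_deriv this] show ?thesis by simp
qed

lemma W_bounds:
  assumes "0 < e" "0 < s"
  shows "max z 0 \<le> Wf e z s" "Wf e z s \<le> max z 0 + wd e s"
proof -
  have wp: "0 < wd e s" using wd_pos assms by simp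
  have m: "wd e s * max (z / wd e s) 0 = max z 0"
    using wp by (simp add: max_def field_simps)
  show "max z 0 \<le> Wf e z s"
    unfolding Wf_def using mult_left_mono[OF gG_lower[of "z / wd e s"], of "wd e s"] wp m by simp
  show "Wf e z s \<le> max z 0 + wd e s"
    unfolding Wf_def using mult_left_mono[OF gG_upper[of "z / wd e s"], of "wd e s"] wp m
    by (simp add: distrib_left)
qed


lemma test_fun_add:
  assumes "test_fun f fx ft fxx" "test_fun g gx gt gxx"
  shows "test_fun (\<lambda>p. f p + g p) (\<lambda>p. fx p + gx p) (\<lambda>p. ft p + gt p) (\<lambda>p. fxx p + gxx p)"
  using assms unfolding test_fun_def by (auto intro!: DERIV_add continuous_intros)

lemma test_fun_cmult:
  assumes "test_fun f fx ft fxx"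
  shows "test_fun (\<lambda>p. c * f p) (\<lambda>p. c * fx p) (\<lambda>p. c * ft p) (\<lambda>p. c * fxx p)"
  using assms unfolding test_fun_def by (auto intro!: DERIV_cmult continuous_intros)

lemma test_fun_const: "test_fun (\<lambda>p. c) (\<lambda>p. 0) (\<lambda>p. 0) (\<lambda>p. 0)"
  unfolding test_fun_def by auto

definition tau :: "real \<Rightarrow> real \<Rightarrow> real" where
  "tau b t = t + (min (t - b) 0)\<^sup>2 / (2 * b)"

definition taud :: "real \<Rightarrow> real \<Rightarrow> real" where
  "taud b t = 1 + min (t - b) 0 / b"

lemma tau_deriv: "0 < b \<Longrightarrow> (tau b has_real_derivative taud b t) (at t)"
proof -
  assume b: "0 < b"
  have "((\<lambda>t. (min (t - b) 0)\<^sup>2) has_real_derivative 2 * min (t - b) 0 * 1) (at t)"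
    by (rule DERIV_chain2[OF sqmin_deriv]) (auto intro!: derivative_eq_intros)
  then have "((\<lambda>t. t + (min (t - b) 0)\<^sup>2 / (2 * b)) has_real_derivative 1 + 2 * min (t - b) 0 * 1 / (2 * b)) (at t)"
    by (intro DERIV_add DERIV_ident DERIV_cdivide)
  then show ?thesis using b by (simp add: tau_def[abs_def] taud_def)
qed

lemma tau_pos: "0 < b \<Longrightarrow> b / 2 \<le> tau b t"
proof (cases "t \<ge> b")
  case True
  assume b: "0 < b"
  then show ?thesis using True by (simp add: tau_def)
next
  case False
  assume b: "0 < b"
  have "tau b t = (t\<^sup>2 + b\<^sup>2) / (2 * b)"
    using False b by (simp add: tau_def min_def field_simps power2_eq_square)
  also have "\<dots> \<ge> b / 2"
    using b by (simp add: field_simps power2_eq_square)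
  finally show ?thesis .
qed

lemma tau_eq: "b \<le> t \<Longrightarrow> tau b t = t" "b \<le> t \<Longrightarrow> taud b t = 1"
  by (simp_all add: tau_def taud_def)

lemma continuous_on_gN[continuous_intros]: "continuous_on S f \<Longrightarrow> continuous_on S (\<lambda>x. gN (f x))"
  by (rule continuous_on_compose2[of UNIV gN]) (auto intro!: continuous_at_imp_continuous_on DERIV_isCont[OF gN_deriv])

definition xi :: "real \<Rightarrow> real \<Rightarrow> real \<Rightarrow> real \<times> real \<Rightarrow> real" where
  "xi e b d p = (fst p - snd p + d) / wd e (tau b (snd p))"

definition rphi where "rphi e b d p = Wf e (fst p - snd p + d) (tau b (snd p))"
definition rphix where "rphix e b d p = gN (xi e b d p)"
definition rphixx where "rphixx e b d p = exp (- ((xi e b d p)\<^sup>2)) / (sqrt pi * wd e (tau b (snd p)))"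
definition rphit where "rphit e b d p = - rphix e b d p + taud b (snd p) * (e * rphixx e b d p)"

lemma continuous_on_wd_tau:
  assumes "0 < b" "0 < e"
  shows "continuous_on UNIV (\<lambda>p::real\<times>real. wd e (tau b (snd p)))"
  using assms unfolding wd_def tau_def by (intro continuous_intros) auto

lemma wd_tau_pos: "0 < b \<Longrightarrow> 0 < e \<Longrightarrow> 0 < wd e (tau b t)"
  using tau_pos[of b t] by (intro wd_pos) auto

lemma continuous_on_xi:
  assumes "0 < b" "0 < e"
  shows "continuous_on UNIV (xi e b d)"
proof -
  have nz: "\<forall>p::real\<times>real\<in>UNIV. wd e (tau b (snd p)) \<noteq> 0"
  proof
    fix p :: "real \<times> real"
    show "wd e (tau b (snd p)) \<noteq> 0" using wd_tau_pos[OF assms, of "snd p"] by linarith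
  qed
  show ?thesis unfolding xi_def[abs_def]
    by (intro continuous_intros continuous_on_wd_tau[OF assms] nz)
qed

lemma test_fun_ramp:
  assumes b: "0 < b" and e: "0 < e"
  shows "test_fun (rphi e b d) (rphix e b d) (rphit e b d) (rphixx e b d)"
  unfolding test_fun_def
proof (intro conjI allI)
  fix x t :: real
  have tp: "0 < tau b t" using tau_pos[OF b, of t] b by simp
  have wp: "0 < wd e (tau b t)" using wd_tau_pos[OF b e] .
  show "((\<lambda>y. rphi e b d (y, t)) has_real_derivative rphix e b d (x, t)) (at x)"
  proof -
    have "((\<lambda>y. y - t + d) has_real_derivative 1) (at x)" by (auto intro!: derivative_eq_intros)
    moreover have "((\<lambda>_. tau b t) has_real_derivative 0) (at x)" by simp
    ultimately have "((\<lambda>y. Wf e (y - t + d) (tau b t)) has_real_derivative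
      1 * gN ((x - t + d) / wd e (tau b t)) + 0 * (e * exp (- (((x - t + d) / wd e (tau b t))\<^sup>2)) / (sqrt pi * wd e (tau b t)))) (at x)"
      using W_deriv[of e "\<lambda>y. y - t + d" 1 x "\<lambda>_. tau b t" 0] e tp by simp
    then show ?thesis by (simp add: rphi_def rphix_def xi_def)
  qed
  show "((\<lambda>s. rphi e b d (x, s)) has_real_derivative rphit e b d (x, t)) (at t)"
  proof -
    have "((\<lambda>s. x - s + d) has_real_derivative -1) (at t)" by (auto intro!: derivative_eq_intros)
    from W_deriv[OF e this tau_deriv[OF b] tp]
    show ?thesis by (simp add: rphi_def rphit_def rphix_def rphixx_def xi_def algebra_simps)
  qed
  show "((\<lambda>y. rphix e b d (y, t)) has_real_derivative rphixx e b d (x, t)) (at x)"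
  proof -
    have "((\<lambda>y. (y - t + d) / wd e (tau b t)) has_real_derivative 1 / wd e (tau b t)) (at x)"
      using wp by (auto intro!: derivative_eq_intros)
    from DERIV_chain2[OF gN_deriv this] show ?thesis
      by (simp add: rphix_def rphixx_def xi_def)
  qed
next
  have c: "continuous_on UNIV (xi e b d)" by (rule continuous_on_xi[OF b e])
  have cw: "continuous_on UNIV (\<lambda>p::real\<times>real. wd e (tau b (snd p)))" by (rule continuous_on_wd_tau[OF b e])
  have nz: "\<forall>p\<in>UNIV. sqrt pi * wd e (tau b (snd p)) \<noteq> 0" using wd_tau_pos[OF b e] by (simp add: less_imp_neq[symmetric])
  show cx: "continuous_on UNIV (rphix e b d)"
    unfolding rphix_def[abs_def] by (intro continuous_intros c)
  show cxx: "continuous_on UNIV (rphixx e b d)"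
    unfolding rphixx_def[abs_def] by (intro continuous_intros c cw nz)
  show "continuous_on UNIV (rphit e b d)"
    unfolding rphit_def[abs_def] taud_def using b by (intro continuous_intros cx cxx) auto
qed

lemma rphi_eq: "0 < b \<Longrightarrow> b \<le> snd p \<Longrightarrow> rphi e b d p = RR e (fst p - snd p + d) (snd p)"
  by (simp add: rphi_def RR_def tau_eq)

lemma rphi_pde:
  assumes "0 < b" "b \<le> snd p"
  shows "rphit e b d p + rphix e b d p - e * rphixx e b d p = 0"
  using assms by (simp add: rphit_def tau_eq)

definition pen :: "real \<Rightarrow> real \<Rightarrow> real \<Rightarrow> real \<times> real \<Rightarrow> real" where
  "pen g K t0 p = g * exp (K * snd p) * (1 + (fst p)\<^sup>2) + (max (snd p - t0) 0)\<^sup>2"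

lemma test_fun_pen:
  "test_fun (pen g K t0) (\<lambda>p. g * exp (K * snd p) * (2 * fst p))
     (\<lambda>p. g * (K * exp (K * snd p)) * (1 + (fst p)\<^sup>2) + 2 * max (snd p - t0) 0)
     (\<lambda>p. g * exp (K * snd p) * 2)"
  unfolding test_fun_def
proof (intro conjI allI)
  fix x t :: real
  show "((\<lambda>y. pen g K t0 (y, t)) has_real_derivative g * exp (K * snd (x, t)) * (2 * fst (x, t))) (at x)"
    unfolding pen_def by (auto intro!: derivative_eq_intros)
  show "((\<lambda>y. g * exp (K * snd (y, t)) * (2 * fst (y, t))) has_real_derivative g * exp (K * snd (x, t)) * 2) (at x)"
    by (auto intro!: derivative_eq_intros)
  have "((\<lambda>s. (max (s - t0) 0)\<^sup>2) has_real_derivative 2 * max (t - t0) 0 * 1) (at t)"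
  proof -
    have "((\<lambda>s. s - t0) has_real_derivative 1) (at t)" by (auto intro!: derivative_eq_intros)
    from DERIV_chain2[OF sqmax_deriv this] show ?thesis .
  qed
  moreover have "((\<lambda>s. g * exp (K * s) * (1 + x\<^sup>2)) has_real_derivative g * (K * exp (K * t)) * (1 + x\<^sup>2)) (at t)"
    by (auto intro!: derivative_eq_intros)
  ultimately have "((\<lambda>s. g * exp (K * s) * (1 + x\<^sup>2) + (max (s - t0) 0)\<^sup>2) has_real_derivative
      g * (K * exp (K * t)) * (1 + x\<^sup>2) + 2 * max (t - t0) 0 * 1) (at t)"
    by (intro DERIV_add)
  then show "((\<lambda>s. pen g K t0 (x, s)) has_real_derivative
      g * (K * exp (K * snd (x, t))) * (1 + (fst (x, t))\<^sup>2) + 2 * max (snd (x, t) - t0) 0) (at t)"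
    unfolding pen_def by simp
qed (intro continuous_intros)+


lemma uc_growth:
  assumes uc: "uniformly_continuous_on {p::real\<times>real. 0 \<le> snd p} w"
  shows "\<exists>C. \<forall>p. 0 \<le> snd p \<longrightarrow> \<bar>w p\<bar> \<le> C * (1 + norm p)"
proof -
  let ?H = "{p::real\<times>real. 0 \<le> snd p}"
  obtain d where d: "d > 0" and dd: "\<forall>x\<in>?H. \<forall>x'\<in>?H. dist x' x < d \<longrightarrow> dist (w x') (w x) < 1"
    using uc unfolding uniformly_continuous_on_def by (meson zero_less_one)
  have claim: "\<forall>p. 0 \<le> snd p \<longrightarrow> norm p \<le> real n * (d / 2) \<longrightarrow> \<bar>w p - w 0\<bar> \<le> real n" for n
  proof (induction n)
    case 0
    then show ?case by auto
  next
    case (Suc n)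
    show ?case
    proof (intro allI impI)
      fix p :: "real \<times> real"
      assume p: "0 \<le> snd p" "norm p \<le> real (Suc n) * (d / 2)"
      define q where "q = (real n / real (Suc n)) *\<^sub>R p"
      have q: "0 \<le> snd q" using p by (simp add: q_def)
      have nq: "norm q = real n / real (Suc n) * norm p" by (simp add: q_def)
      have "norm q \<le> real n / real (Suc n) * (real (Suc n) * (d / 2))"
        unfolding nq by (rule mult_left_mono[OF p(2)]) simp
      also have "\<dots> = real n * (d / 2)" by simp
      finally have "\<bar>w q - w 0\<bar> \<le> real n" using Suc.IH q by blast
      moreover have "dist p q < d"
      proof -
        have "p - q = (1 - real n / real (Suc n)) *\<^sub>R p"
          by (simp add: q_def scaleR_diff_left)
        also have "1 - real n / real (Suc n) = 1 / real (Suc n)"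
          by (simp add: field_simps)
        finally have "p - q = (1 / real (Suc n)) *\<^sub>R p" .
        then have "dist p q = norm p / real (Suc n)" by (simp add: dist_norm)
        also have "\<dots> \<le> d / 2" using p(2) by (simp add: field_simps)
        finally show ?thesis using d by simp
      qed
      then have "dist (w p) (w q) < 1" using dd p(1) q by blast
      then have "\<bar>w p - w q\<bar> < 1" by (simp add: dist_real_def)
      ultimately show "\<bar>w p - w 0\<bar> \<le> real (Suc n)" by simp
    qed
  qed
  show ?thesis
  proof (intro exI allI impI)
    fix p :: "real \<times> real"
    assume p: "0 \<le> snd p"
    define n where "n = nat \<lceil>norm p / (d / 2)\<rceil>"
    have n1: "norm p / (d / 2) \<le> real n" unfolding n_def by linarith
    have n2: "real n \<le> norm p / (d / 2) + 1" unfolding n_def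
      using norm_ge_zero[of p] d by (simp add: of_nat_nat)
    have "norm p \<le> real n * (d / 2)" using n1 d by (simp add: field_simps)
    then have "\<bar>w p - w 0\<bar> \<le> real n" using claim p by blast
    then have "\<bar>w p\<bar> \<le> \<bar>w 0\<bar> + norm p * (2 / d) + 1" using n2 by simp
    also have "\<dots> \<le> (\<bar>w 0\<bar> + 2 / d + 1) * (1 + norm p)"
    proof -
      have "(\<bar>w 0\<bar> + 2 / d + 1) * (1 + norm p) = \<bar>w 0\<bar> + norm p * (2 / d) + 1 + (2 / d + norm p * \<bar>w 0\<bar> + norm p)"
        by (simp add: algebra_simps add_divide_distrib)
      moreover have "0 \<le> 2 / d + norm p * \<bar>w 0\<bar> + norm p" using d by simp
      ultimately show ?thesis by linarith
    qed
    finally show "\<bar>w p\<bar> \<le> (\<bar>w 0\<bar> + 2 / d + 1) * (1 + norm p)" .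
  qed
qed

lemma quad1: "0 < g \<Longrightarrow> D * y - g * y\<^sup>2 \<le> D\<^sup>2 / (4 * (g::real))"
proof -
  assume g: "0 < g"
  have "4 * g * (D * y - g * y\<^sup>2) = D\<^sup>2 - (D - 2 * g * y)\<^sup>2"
    by (simp add: algebra_simps power2_eq_square)
  also have "\<dots> \<le> D\<^sup>2" by simp
  finally show ?thesis using g by (simp add: field_simps)
qed

lemma quad2:
  fixes D g y M :: real
  assumes "1 \<le> y" "D + M \<le> g * y" "0 \<le> M"
  shows "D * y - g * y\<^sup>2 \<le> - M"
proof -
  have "D * y - g * y\<^sup>2 = y * (D - g * y)" by (simp add: algebra_simps power2_eq_square)
  also have "\<dots> \<le> 1 * (D - g * y)"
    using assms by (intro mult_right_mono_neg) auto
  also have "\<dots> \<le> - M" using assms by simp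
  finally show ?thesis .
qed

lemma comparison:
  fixes v w :: "real \<times> real \<Rightarrow> real" and e :: real
  assumes e: "0 \<le> e"
    and wuc: "uniformly_continuous_on {p. 0 \<le> snd p} w"
    and wsup: "visc_super e w"
    and vc: "continuous_on {p. 0 \<le> snd p} v"
    and vtest: "\<And>b. 0 < b \<Longrightarrow> \<exists>V Vx Vt Vxx. test_fun V Vx Vt Vxx \<and>
                   (\<forall>p. b \<le> snd p \<longrightarrow> V p = v p \<and> Vt p + Vx p - e * Vxx p \<le> 0)"
    and init: "\<And>x. v (x, 0) \<le> w (x, 0)"
    and growth: "\<exists>C. \<forall>p. 0 \<le> snd p \<longrightarrow> v p \<le> C * (1 + norm p)"
    and p0: "0 \<le> snd p0"
  shows "v p0 \<le> w p0"
proof (rule ccontr)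
  assume "\<not> v p0 \<le> w p0"
  then have mpos: "0 < v p0 - w p0" by simp
  define m where "m = v p0 - w p0"
  define x0 where "x0 = fst p0"
  define t0 where "t0 = snd p0"
  have p0eq: "p0 = (x0, t0)" by (simp add: x0_def t0_def)
  let ?H = "{p::real\<times>real. 0 \<le> snd p}"
  obtain Cw where Cw: "\<forall>p. 0 \<le> snd p \<longrightarrow> \<bar>w p\<bar> \<le> Cw * (1 + norm p)"
    using uc_growth[OF wuc] by blast
  obtain Cv where Cv: "\<forall>p. 0 \<le> snd p \<longrightarrow> v p \<le> Cv * (1 + norm p)"
    using growth by blast
  define D where "D = \<bar>Cw\<bar> + \<bar>Cv\<bar>"
  have D0: "0 \<le> D" by (simp add: D_def)
  have vw: "v p - w p \<le> D * (1 + \<bar>fst p\<bar> + snd p)" if "0 \<le> snd p" for p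
  proof -
    have np: "norm p \<le> \<bar>fst p\<bar> + snd p"
      using norm_Pair_le[of "fst p" "snd p"] that by simp
    have a: "\<bar>w p\<bar> \<le> Cw * (1 + norm p)" using Cw that by blast
    have b: "v p \<le> Cv * (1 + norm p)" using Cv that by blast
    have "v p - w p \<le> (Cv + Cw) * (1 + norm p)"
      using a b by (simp add: algebra_simps)
    also have "\<dots> \<le> D * (1 + norm p)"
      unfolding D_def by (rule mult_right_mono) auto
    also have "\<dots> \<le> D * (1 + \<bar>fst p\<bar> + snd p)"
      using np D0 by (intro mult_left_mono) auto
    finally show ?thesis .
  qed
  have t0pos: "0 < t0"
  proof (rule ccontr)
    assume "\<not> 0 < t0"
    then have "t0 = 0" using p0 t0_def by simp
    then show False using init[of x0] mpos p0eq by simp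
  qed
  define K where "K = 3 + 2 * e"
  define g where "g = m / (2 * exp (K * t0) * (1 + x0\<^sup>2))"
  have gpos: "0 < g" unfolding g_def m_def using mpos by (simp add: add_pos_nonneg)
  define Phi where "Phi q = v q - w q - pen g K t0 q" for q
  have gm: "g * exp (K * t0) * (1 + x0\<^sup>2) = m / 2"
  proof -
    have "0 < exp (K * t0) * (1 + x0\<^sup>2)" by (simp add: add_pos_nonneg)
    then show ?thesis unfolding g_def by (simp add: field_simps)
  qed
  have Phi0: "Phi p0 = m / 2"
    unfolding Phi_def pen_def using p0eq gm by (simp add: m_def)
  define A1 where "A1 = D * (1 + t0)"
  define R where "R = (D + A1 + D\<^sup>2 / 4 + 1) / g + 1"
  define S where "S = D + A1 + D\<^sup>2 / (4 * g) + 1"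
  define T where "T = t0 + S"
  have A10: "0 \<le> A1" unfolding A1_def using D0 t0pos by simp
  have Phib: "Phi q \<le> A1 + (D * \<bar>fst q\<bar> - g * \<bar>fst q\<bar>\<^sup>2) + (D * max (snd q - t0) 0 - (max (snd q - t0) 0)\<^sup>2)"
    if q: "0 \<le> snd q" for q
  proof -
    have ex: "1 \<le> exp (K * snd q)" using q e by (simp add: K_def)
    have "g * 1 * (1 + (fst q)\<^sup>2) \<le> g * exp (K * snd q) * (1 + (fst q)\<^sup>2)"
      using ex gpos by (intro mult_right_mono mult_left_mono) auto
    then have "Phi q \<le> D * (1 + \<bar>fst q\<bar> + snd q) - g * (1 + (fst q)\<^sup>2) - (max (snd q - t0) 0)\<^sup>2"
      using vw[OF q] unfolding Phi_def pen_def by simp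
    moreover have "snd q \<le> t0 + max (snd q - t0) 0" by simp
    then have "D * snd q \<le> D * t0 + D * max (snd q - t0) 0"
      using D0 by (metis distrib_left mult_left_mono)
    ultimately show ?thesis unfolding A1_def using gpos
      by (simp add: algebra_simps power2_abs)
  qed
  have outside: "Phi q < 0" if q: "0 \<le> snd q" and out: "R < \<bar>fst q\<bar> \<or> T < snd q" for q
  proof -
    let ?y = "\<bar>fst q\<bar>" and ?s = "max (snd q - t0) 0"
    have b1: "D * ?y - g * ?y\<^sup>2 \<le> D\<^sup>2 / (4 * g)" by (rule quad1[OF gpos])
    have b2: "D * ?s - 1 * ?s\<^sup>2 \<le> D\<^sup>2 / (4 * 1)" by (rule quad1) simp
    from out show ?thesis
    proof
      assume Ry: "R < ?y"
      have R1: "1 \<le> R" unfolding R_def using gpos D0 A10 by simp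
      have gR: "g * R = D + A1 + D\<^sup>2 / 4 + 1 + g" unfolding R_def using gpos by (simp add: field_simps)
      have "g * R \<le> g * ?y" using Ry gpos by simp
      then have y1: "1 \<le> ?y" and y2: "D + (A1 + D\<^sup>2 / 4 + 1) \<le> g * ?y"
        using R1 Ry gR gpos by linarith+
      have "D * ?y - g * ?y\<^sup>2 \<le> - (A1 + D\<^sup>2 / 4 + 1)"
        by (rule quad2[OF y1 y2]) (use A10 in simp)
      then show ?thesis using Phib[OF q] b2 by simp
    next
      assume Tq: "T < snd q"
      have "0 \<le> D\<^sup>2 / (4 * g)" using gpos by simp
      then have s1: "1 \<le> ?s" and s2: "D + (A1 + D\<^sup>2 / (4 * g) + 1) \<le> 1 * ?s"
        using Tq D0 A10 unfolding T_def S_def by auto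
      have "D * ?s - 1 * ?s\<^sup>2 \<le> - (A1 + D\<^sup>2 / (4 * g) + 1)"
        by (rule quad2[OF s1 s2]) (use A10 gpos in simp)
      then show ?thesis using Phib[OF q] b1 by simp
    qed
  qed
  define KS where "KS = {-R..R} \<times> {0..T}"
  have KSc: "compact KS" unfolding KS_def by (intro compact_Times compact_Icc)
  have KSH: "KS \<subseteq> ?H" unfolding KS_def by auto
  have p0K: "p0 \<in> KS"
  proof -
    have "\<not> (R < \<bar>fst p0\<bar> \<or> T < snd p0)"
      using outside[OF p0] Phi0 mpos m_def by force
    then show ?thesis unfolding KS_def using p0 by (cases p0) auto
  qed
  have wc: "continuous_on ?H w" by (rule uniformly_continuous_imp_continuous[OF wuc])
  have pc: "continuous_on UNIV (pen g K t0)" unfolding pen_def[abs_def] by (intro continuous_intros)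
  have Phic: "continuous_on KS Phi"
    unfolding Phi_def[abs_def]
    by (intro continuous_intros continuous_on_subset[OF vc KSH] continuous_on_subset[OF wc KSH]
        continuous_on_subset[OF pc]) auto
  obtain ps where ps: "ps \<in> KS" and psmax: "\<forall>q\<in>KS. Phi q \<le> Phi ps"
    using continuous_attains_sup[OF KSc _ Phic] p0K by blast
  have psH: "0 \<le> snd ps" using ps KSH by auto
  have glob: "Phi q \<le> Phi ps" if "0 \<le> snd q" for q
  proof (cases "q \<in> KS")
    case True then show ?thesis using psmax by blast
  next
    case False
    then have "R < \<bar>fst q\<bar> \<or> T < snd q" unfolding KS_def using that by (cases q) auto
    then have "Phi q < 0" using outside that by blast
    also have "0 < Phi p0" using Phi0 mpos m_def by simp
    also have "Phi p0 \<le> Phi ps" using psmax p0K by blast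
    finally show ?thesis by simp
  qed
  have Phips: "m / 2 \<le> Phi ps" using glob[OF p0] Phi0 by simp
  have tspos: "0 < snd ps"
  proof (rule ccontr)
    assume "\<not> 0 < snd ps"
    then have s0: "snd ps = 0" using psH by simp
    have "v ps \<le> w ps" using init[of "fst ps"] s0 by (cases ps) simp
    moreover have "0 < pen g K t0 ps" unfolding pen_def using gpos by (simp add: add_pos_nonneg)
    ultimately have "Phi ps < 0" unfolding Phi_def by simp
    then show False using Phips mpos m_def by simp
  qed
  define b where "b = snd ps / 2"
  have bpos: "0 < b" using tspos by (simp add: b_def)
  have bps: "b \<le> snd ps" using tspos by (simp add: b_def)
  obtain V Vx Vt Vxx where V: "test_fun V Vx Vt Vxx"
    and Veq: "\<forall>p. b \<le> snd p \<longrightarrow> V p = v p \<and> Vt p + Vx p - e * Vxx p \<le> 0"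
    using vtest[OF bpos] by blast
  let ?px = "\<lambda>p. g * exp (K * snd p) * (2 * fst p)"
  let ?pt = "\<lambda>p. g * (K * exp (K * snd p)) * (1 + (fst p)\<^sup>2) + 2 * max (snd p - t0) 0"
  let ?pxx = "\<lambda>p. g * exp (K * snd p) * 2"
  have tf: "test_fun (\<lambda>p. V p + (-1) * pen g K t0 p) (\<lambda>p. Vx p + (-1) * ?px p)
      (\<lambda>p. Vt p + (-1) * ?pt p) (\<lambda>p. Vxx p + (-1) * ?pxx p)"
    by (intro test_fun_add V test_fun_cmult test_fun_pen)
  have psh: "ps \<in> half_plane" using tspos by (simp add: half_plane_def)
  have lm: "loc_min_on half_plane (\<lambda>q. w q - (V q + (-1) * pen g K t0 q)) ps"
    unfolding loc_min_on_def
  proof (intro exI[of _ b] conjI ballI impI)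
    show "0 < b" by (rule bpos)
    fix q assume qh: "q \<in> half_plane" and dq: "dist q ps < b"
    have "\<bar>snd q - snd ps\<bar> \<le> dist q ps" using dist_snd_le[of q ps] by (simp add: dist_real_def)
    then have "b \<le> snd q" using dq unfolding b_def by simp
    then have Vq: "V q = v q" using Veq by blast
    have Vps: "V ps = v ps" using Veq bps by blast
    have "Phi q \<le> Phi ps" using glob qh by (simp add: half_plane_def)
    then show "w ps - (V ps + (-1) * pen g K t0 ps) \<le> w q - (V q + (-1) * pen g K t0 q)"
      unfolding Phi_def using Vq Vps by simp
  qed
  have ineq: "(Vt ps + (-1) * ?pt ps) + (Vx ps + (-1) * ?px ps) - e * (Vxx ps + (-1) * ?pxx ps) \<ge> 0"
    using wsup tf psh lm unfolding visc_super_def by blast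
  have Vps: "Vt ps + Vx ps - e * Vxx ps \<le> 0" using Veq bps by blast
  define x where "x = fst ps"
  define t where "t = snd ps"
  have "0 < 3 + 3 * x\<^sup>2 + 2 * x + 2 * e * x\<^sup>2"
  proof -
    have "0 < 2 + 2 * x\<^sup>2 + (1 + x)\<^sup>2" by (simp add: add_pos_nonneg)
    also have "\<dots> = 3 + 3 * x\<^sup>2 + 2 * x" by (simp add: power2_eq_square algebra_simps)
    finally show ?thesis using e by (simp add: add_pos_nonneg)
  qed
  then have pos: "0 < g * exp (K * t) * (3 + 3 * x\<^sup>2 + 2 * x + 2 * e * x\<^sup>2)"
    using gpos by simp
  have eq: "(Vt ps + (-1) * ?pt ps) + (Vx ps + (-1) * ?px ps) - e * (Vxx ps + (-1) * ?pxx ps)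
      = (Vt ps + Vx ps - e * Vxx ps) - g * exp (K * t) * (3 + 3 * x\<^sup>2 + 2 * x + 2 * e * x\<^sup>2) - 2 * max (t - t0) 0"
    unfolding x_def t_def K_def by (simp add: algebra_simps power2_eq_square)
  have mx: "0 \<le> max (t - t0) 0" by simp
  have fin: "0 \<le> (Vt ps + Vx ps - e * Vxx ps) - g * exp (K * t) * (3 + 3 * x\<^sup>2 + 2 * x + 2 * e * x\<^sup>2) - 2 * max (t - t0) 0"
    using ineq eq by argo
  have abs: "\<And>A P M::real. A \<le> 0 \<Longrightarrow> 0 < P \<Longrightarrow> 0 \<le> M \<Longrightarrow> 0 \<le> A - P - 2 * M \<Longrightarrow> False"
    by linarith
  show False by (rule abs[OF Vps pos mx fin])
qed


lemma continuous_on_gG[continuous_intros]: "continuous_on S f \<Longrightarrow> continuous_on S (\<lambda>x. gG (f x))"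
  by (rule continuous_on_compose2[of UNIV gG]) (auto intro!: continuous_at_imp_continuous_on DERIV_isCont[OF gG_deriv])

lemma RR_bound:
  assumes "0 < e" "0 \<le> s"
  shows "\<bar>RR e z s - max z 0\<bar> \<le> wd e s" "0 \<le> RR e z s"
proof -
  show "\<bar>RR e z s - max z 0\<bar> \<le> wd e s"
  proof (cases "0 < s")
    case True then show ?thesis using W_bounds[OF assms(1) True, of z] by (simp add: RR_def)
  next
    case False then show ?thesis using assms by (simp add: RR_def wd_def)
  qed
  show "0 \<le> RR e z s"
  proof (cases "0 < s")
    case True then show ?thesis using W_bounds[OF assms(1) True, of z] by (simp add: RR_def)
  next
    case False then show ?thesis by (simp add: RR_def)
  qed
qed

lemma RR_cont:
  assumes e: "0 < e"
  shows "continuous_on {q::real\<times>real. 0 \<le> snd q} (\<lambda>q. RR e (fst q) (snd q))"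
  unfolding continuous_on_eq_continuous_within
proof
  let ?S = "{q::real\<times>real. 0 \<le> snd q}"
  let ?f = "\<lambda>q::real\<times>real. RR e (fst q) (snd q)"
  fix q :: "real \<times> real" assume qS: "q \<in> ?S"
  show "continuous (at q within ?S) ?f"
  proof (cases "0 < snd q")
    case True
    let ?O = "{q::real\<times>real. 0 < snd q}"
    have oO: "open ?O" by (intro open_Collect_less continuous_intros)
    have nz: "\<forall>r\<in>?O. wd e (snd r) \<noteq> 0" using wd_pos[OF e] by (auto simp: less_imp_neq[symmetric])
    have "continuous_on ?O (\<lambda>r. Wf e (fst r) (snd r))"
      unfolding Wf_def wd_def by (intro continuous_intros) (use nz in \<open>auto simp: wd_def\<close>)
    then have "isCont (\<lambda>r. Wf e (fst r) (snd r)) q"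
      using oO True continuous_on_eq_continuous_at by blast
    then have "continuous (at q within ?S) (\<lambda>r. Wf e (fst r) (snd r))"
      by (rule continuous_at_imp_continuous_within)
    then show ?thesis
    proof (rule continuous_transform_within[of _ _ _ "snd q"])
      show "0 < snd q" by (rule True)
      show "q \<in> ?S" by (rule qS)
      fix r assume "r \<in> ?S" "dist r q < snd q"
      then have "\<bar>snd r - snd q\<bar> < snd q" using dist_snd_le[of r q] by (simp add: dist_real_def)
      then have "0 < snd r" by simp
      then show "Wf e (fst r) (snd r) = RR e (fst r) (snd r)" by (simp add: RR_def)
    qed
  next
    case False
    then have q0: "snd q = 0" using qS by simp
    have fq: "?f q = max (fst q) 0" using q0 by (simp add: RR_def)
    have lim0: "((\<lambda>r. ?f r - max (fst r) 0) \<longlongrightarrow> 0) (at q within ?S)"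
    proof (rule Lim_null_comparison)
      have "eventually (\<lambda>r. r \<in> ?S) (at q within ?S)" by (simp add: eventually_at_filter)
      then show "\<forall>\<^sub>F r in at q within ?S. norm (?f r - max (fst r) 0) \<le> wd e (snd r)"
        by eventually_elim (simp add: RR_bound(1)[OF e])
      have "((\<lambda>r. wd e (snd r)) \<longlongrightarrow> wd e (snd q)) (at q within ?S)"
        unfolding wd_def by (intro tendsto_intros)
      then show "((\<lambda>r. wd e (snd r)) \<longlongrightarrow> 0) (at q within ?S)" using q0 by (simp add: wd_def)
    qed
    have "((\<lambda>r. max (fst r) 0 + (?f r - max (fst r) 0)) \<longlongrightarrow> max (fst q) 0 + 0) (at q within ?S)"
      by (intro tendsto_intros lim0)
    then show ?thesis unfolding continuous_within using fq by simp
  qed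
qed

lemma sub_neg: "visc_sub e u \<Longrightarrow> visc_super e (\<lambda>p. - u p)"
  unfolding visc_sub_def visc_super_def
proof (intro allI impI)
  fix phi phix phit phixx p
  assume sub: "\<forall>phi phix phit phixx p. test_fun phi phix phit phixx \<and> p \<in> half_plane \<and>
        loc_max_on half_plane (\<lambda>q. u q - phi q) p \<longrightarrow> phit p + phix p - e * phixx p \<le> 0"
  assume h: "test_fun phi phix phit phixx \<and> p \<in> half_plane \<and> loc_min_on half_plane (\<lambda>q. - u q - phi q) p"
  have tf: "test_fun (\<lambda>p. (-1) * phi p) (\<lambda>p. (-1) * phix p) (\<lambda>p. (-1) * phit p) (\<lambda>p. (-1) * phixx p)"
    using h test_fun_cmult by blast
  from h obtain r where r: "r > 0" "\<forall>q\<in>half_plane. dist q p < r \<longrightarrow> - u p - phi p \<le> - u q - phi q"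
    unfolding loc_min_on_def by blast
  then have "\<forall>q\<in>half_plane. dist q p < r \<longrightarrow> u q - (-1) * phi q \<le> u p - (-1) * phi p"
    by auto
  then have "loc_max_on half_plane (\<lambda>q. u q - (-1) * phi q) p"
    unfolding loc_max_on_def using r(1) by blast
  then have "(-1) * phit p + (-1) * phix p - e * ((-1) * phixx p) \<le> 0"
    using sub tf h by blast
  then show "0 \<le> phit p + phix p - e * phixx p" by simp
qed


lemma sq_deriv:
  assumes f: "(f has_real_derivative f') (at t)" and d: "0 < (\<delta>::real)"
  shows "((\<lambda>s. sqrt ((f s)\<^sup>2 + \<delta>\<^sup>2)) has_real_derivative f' * f t / sqrt ((f t)\<^sup>2 + \<delta>\<^sup>2)) (at t)"
proof -
  have qp: "0 < (f t)\<^sup>2 + \<delta>\<^sup>2" using d by (simp add: add_nonneg_pos)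
  have "((\<lambda>s. (f s)\<^sup>2 + \<delta>\<^sup>2) has_real_derivative 2 * f t * f') (at t)"
    using f by (auto intro!: derivative_eq_intros)
  from DERIV_chain2[OF DERIV_real_sqrt[OF qp] this]
  have "((\<lambda>s. sqrt ((f s)\<^sup>2 + \<delta>\<^sup>2)) has_real_derivative inverse (sqrt ((f t)\<^sup>2 + \<delta>\<^sup>2)) / 2 * (2 * f t * f')) (at t)" .
  then show ?thesis by (simp add: field_simps)
qed

lemma sq_deriv2:
  assumes f: "(f has_real_derivative f') (at t)" and d: "0 < (\<delta>::real)"
  shows "((\<lambda>s. f s / sqrt ((f s)\<^sup>2 + \<delta>\<^sup>2)) has_real_derivative
           f' * \<delta>\<^sup>2 / (((f t)\<^sup>2 + \<delta>\<^sup>2) * sqrt ((f t)\<^sup>2 + \<delta>\<^sup>2))) (at t)"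
proof -
  define q where "q = (f t)\<^sup>2 + \<delta>\<^sup>2"
  have qp: "0 < q" using d by (simp add: add_nonneg_pos q_def)
  have sq: "sqrt q * sqrt q = q" using qp by simp
  have sp: "0 < sqrt q" using qp by simp
  have sn: "sqrt ((f t)\<^sup>2 + \<delta>\<^sup>2) \<noteq> 0" using d by simp
  have "((\<lambda>s. f s / sqrt ((f s)\<^sup>2 + \<delta>\<^sup>2)) has_real_derivative
      (f' * sqrt q - f t * (f' * f t / sqrt q)) / (sqrt q * sqrt q)) (at t)"
    using DERIV_divide[OF f sq_deriv[OF f d] sn] unfolding q_def .
  moreover have "(f' * sqrt q - f t * (f' * f t / sqrt q)) / (sqrt q * sqrt q) = f' * \<delta>\<^sup>2 / (q * sqrt q)"
  proof -
    have "(f' * sqrt q - f t * (f' * f t / sqrt q)) = f' * (sqrt q * sqrt q - (f t)\<^sup>2) / sqrt q"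
      using sp by (simp add: field_simps power2_eq_square)
    also have "\<dots> = f' * \<delta>\<^sup>2 / sqrt q" unfolding sq by (simp add: q_def)
    finally show ?thesis unfolding sq using sp qp by (simp add: field_simps)
  qed
  ultimately show ?thesis by (simp add: q_def)
qed

lemma abs_growth: "0 \<le> (n::real) \<Longrightarrow> c \<le> \<bar>c\<bar> * (1 + n)"
proof -
  assume n: "0 \<le> n"
  have "\<bar>c\<bar> * 1 \<le> \<bar>c\<bar> * (1 + n)" using n by (intro mult_left_mono) auto
  then show ?thesis by linarith
qed

lemma u_lower:
  assumes sol: "visc_solution e g u" and e: "0 \<le> e" and gmin: "\<forall>x. g (-1) \<le> g x"
  shows "g (-1) \<le> u (0, 1)"
proof -
  have "(\<lambda>p. g (-1)) (0::real, 1::real) \<le> u (0, 1)"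
    apply (rule comparison[OF e])
    subgoal using sol by (simp add: visc_solution_def)
    subgoal using sol by (simp add: visc_solution_def)
    subgoal by simp
    subgoal for b
      by (rule exI[of _ "\<lambda>p. g (-1)"], rule exI[of _ "\<lambda>p. 0"], rule exI[of _ "\<lambda>p. 0"],
          rule exI[of _ "\<lambda>p. 0"]) (use test_fun_const in auto)
    subgoal for x using sol gmin by (simp add: visc_solution_def)
    subgoal by (rule exI[of _ "\<bar>g (-1)\<bar>"]) (auto intro!: abs_growth)
    subgoal by simp
    done
  then show ?thesis by simp
qed


lemma u_upper_delta:
  assumes sol: "visc_solution 0 g u" and lip: "L-lipschitz_on UNIV g" and d: "0 < \<delta>"
  shows "u (0, 1) \<le> g (-1) + L * \<delta>"
proof -
  have L0: "0 \<le> L" using lip by (simp add: lipschitz_on_def)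
  define Y where "Y p = g (-1) + L * sqrt ((fst p - snd p + 1)\<^sup>2 + \<delta>\<^sup>2)" for p :: "real \<times> real"
  define Yx where "Yx p = L * ((fst p - snd p + 1) / sqrt ((fst p - snd p + 1)\<^sup>2 + \<delta>\<^sup>2))" for p :: "real \<times> real"
  define Yxx where "Yxx p = L * (1 * \<delta>\<^sup>2 / (((fst p - snd p + 1)\<^sup>2 + \<delta>\<^sup>2) * sqrt ((fst p - snd p + 1)\<^sup>2 + \<delta>\<^sup>2)))" for p :: "real \<times> real"
  have qpos: "0 < (y::real)\<^sup>2 + \<delta>\<^sup>2" for y using d by (simp add: add_nonneg_pos)
  have tfY: "test_fun Y Yx (\<lambda>p. - Yx p) Yxx"
    unfolding test_fun_def
  proof (intro conjI allI)
    fix x t :: real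
    have f1: "((\<lambda>y. y - t + 1) has_real_derivative 1) (at x)" by (auto intro!: derivative_eq_intros)
    have f2: "((\<lambda>s. x - s + 1) has_real_derivative -1) (at t)" by (auto intro!: derivative_eq_intros)
    show "((\<lambda>y. Y (y, t)) has_real_derivative Yx (x, t)) (at x)"
      using DERIV_add[OF DERIV_const DERIV_cmult[OF sq_deriv[OF f1 d]], of "g (-1)" L]
      by (simp add: Y_def Yx_def)
    show "((\<lambda>s. Y (x, s)) has_real_derivative - Yx (x, t)) (at t)"
      unfolding Y_def Yx_def fst_conv snd_conv
      by (rule DERIV_cong[OF DERIV_add[OF DERIV_const DERIV_cmult[OF sq_deriv[OF f2 d]]]]) (simp add: minus_divide_left algebra_simps)
    show "((\<lambda>y. Yx (y, t)) has_real_derivative Yxx (x, t)) (at x)"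
      using DERIV_cmult[OF sq_deriv2[OF f1 d], of L]
      by (simp add: Yx_def Yxx_def)
  next
    have nz1: "\<forall>p\<in>UNIV. sqrt ((fst p - snd p + 1)\<^sup>2 + \<delta>\<^sup>2) \<noteq> (0::real)"
    proof
      fix p :: "real \<times> real"
      show "sqrt ((fst p - snd p + 1)\<^sup>2 + \<delta>\<^sup>2) \<noteq> 0" using d by simp
    qed
    have nz2: "\<forall>p\<in>UNIV. ((fst p - snd p + 1)\<^sup>2 + \<delta>\<^sup>2) * sqrt ((fst p - snd p + 1)\<^sup>2 + \<delta>\<^sup>2) \<noteq> (0::real)"
    proof
      fix p :: "real \<times> real"
      show "((fst p - snd p + 1)\<^sup>2 + \<delta>\<^sup>2) * sqrt ((fst p - snd p + 1)\<^sup>2 + \<delta>\<^sup>2) \<noteq> 0"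
        using d by simp
    qed
    show cx: "continuous_on UNIV Yx" unfolding Yx_def[abs_def]
      by (intro continuous_intros nz1)
    show "continuous_on UNIV (\<lambda>p. - Yx p)" by (intro continuous_intros cx)
    show "continuous_on UNIV Yxx" unfolding Yxx_def[abs_def]
      by (intro continuous_intros nz2)
  qed
  have tfv: "test_fun (\<lambda>p. (-1) * Y p) (\<lambda>p. (-1) * Yx p) (\<lambda>p. (-1) * (- Yx p)) (\<lambda>p. (-1) * Yxx p)"
    by (rule test_fun_cmult[OF tfY])
  have usol: "visc_super 0 (\<lambda>p. - u p)" using sol sub_neg by (simp add: visc_solution_def)
  have "(\<lambda>p. (-1) * Y p) (0::real, 1::real) \<le> (\<lambda>p. - u p) (0, 1)"
    apply (rule comparison[of 0])
    subgoal by simp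
    subgoal using sol by (intro uniformly_continuous_on_minus) (simp add: visc_solution_def)
    subgoal by (rule usol)
    subgoal unfolding Y_def by (intro continuous_intros)
    subgoal for b
      by (rule exI[of _ "\<lambda>p. (-1) * Y p"], rule exI[of _ "\<lambda>p. (-1) * Yx p"],
          rule exI[of _ "\<lambda>p. (-1) * (- Yx p)"], rule exI[of _ "\<lambda>p. (-1) * Yxx p"])
         (use tfv in auto)
    subgoal for x
    proof -
      have "dist (g x) (g (-1)) \<le> L * dist x (-1)" using lip by (simp add: lipschitz_on_def)
      then have A: "g x \<le> g (-1) + L * \<bar>x + 1\<bar>" by (simp add: dist_real_def)
      have B: "\<bar>x + 1\<bar> \<le> sqrt ((x + 1)\<^sup>2 + \<delta>\<^sup>2)"
        by (rule real_le_rsqrt) simp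
      have C: "L * \<bar>x + 1\<bar> \<le> L * sqrt ((x + 1)\<^sup>2 + \<delta>\<^sup>2)" using B L0 by (rule mult_left_mono)
      show ?thesis using A C sol by (simp add: Y_def visc_solution_def)
    qed
    subgoal
    proof (rule exI[of _ "\<bar>g (-1)\<bar>"], intro allI impI)
      fix p :: "real \<times> real" assume "0 \<le> snd p"
      have "0 \<le> L * sqrt ((fst p - snd p + 1)\<^sup>2 + \<delta>\<^sup>2)" using L0 by simp
      then have "(-1) * Y p \<le> - g (-1)" by (simp add: Y_def)
      also have "\<dots> \<le> \<bar>- g (-1)\<bar> * (1 + norm p)" by (rule abs_growth) simp
      finally show "(-1) * Y p \<le> \<bar>g (-1)\<bar> * (1 + norm p)" by simp
    qed
    subgoal by simp
    done
  then show ?thesis using d by (simp add: Y_def)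
qed

lemma u_upper:
  assumes sol: "visc_solution 0 g u" and lip: "L-lipschitz_on UNIV g"
  shows "u (0, 1) \<le> g (-1)"
proof (rule field_le_epsilon)
  fix \<epsilon> :: real assume ep: "0 < \<epsilon>"
  have L0: "0 \<le> L" using lip by (simp add: lipschitz_on_def)
  have "u (0, 1) \<le> g (-1) + L * (\<epsilon> / (L + 1))"
    by (rule u_upper_delta[OF sol lip]) (use ep L0 in simp)
  also have "L * (\<epsilon> / (L + 1)) \<le> \<epsilon>"
    using ep L0 by (simp add: field_simps)
  finally show "u (0, 1) \<le> g (-1) + \<epsilon>" by simp
qed


lemma RR_cont_shift:
  assumes e: "0 < e"
  shows "continuous_on {p::real\<times>real. 0 \<le> snd p} (\<lambda>p. RR e (fst p - snd p + d) (snd p))"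
proof -
  have "continuous_on {p::real\<times>real. 0 \<le> snd p} (\<lambda>p. (\<lambda>q. RR e (fst q) (snd q)) ((\<lambda>p. (fst p - snd p + d, snd p)) p))"
    by (rule continuous_on_compose2[OF RR_cont[OF e]]) (auto intro!: continuous_intros)
  then show ?thesis by simp
qed

lemma RR_le:
  assumes e: "0 < e" and s: "0 \<le> s"
  shows "RR e z s \<le> \<bar>z\<bar> + 1 + e * s"
proof -
  have "\<bar>RR e z s - max z 0\<bar> \<le> wd e s" by (rule RR_bound(1)[OF e s])
  moreover have "wd e s \<le> 1 + e * s"
  proof -
    have es: "0 \<le> e * s" using e s by simp
    have "0 \<le> (sqrt (e * s) - 1)\<^sup>2" by simp
    also have "(sqrt (e * s) - 1)\<^sup>2 = e * s - 2 * sqrt (e * s) + 1"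
      using es by (simp add: power2_eq_square algebra_simps)
    finally show ?thesis by (simp add: wd_def)
  qed
  moreover have "max z 0 \<le> \<bar>z\<bar>" by simp
  ultimately show ?thesis by linarith
qed

lemma gG_mvt:
  assumes "\<xi> \<le> -1"
  shows "gG (-1) + gN (-1) \<le> gG \<xi> - \<xi> * gN (-1)"
proof -
  have "(\<lambda>y. gG y - y * gN (-1)) (-1) \<le> (\<lambda>y. gG y - y * gN (-1)) \<xi>"
  proof (rule DERIV_nonpos_imp_nonincreasing[OF assms])
    fix y assume y: "\<xi> \<le> y" "y \<le> -1"
    have "((\<lambda>y. gG y - y * gN (-1)) has_real_derivative gN y - 1 * gN (-1)) (at y)"
      by (intro DERIV_diff gG_deriv DERIV_cmult_right DERIV_ident)
    moreover have "gN y - 1 * gN (-1) \<le> 0" using gN_mono[OF y(2)] by simp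
    ultimately show "\<exists>D. ((\<lambda>y. gG y - y * gN (-1)) has_real_derivative D) (at y) \<and> D \<le> 0" by blast
  qed
  then show ?thesis by simp
qed


lemma ueps_lower:
  assumes sol: "visc_solution e g w" and e: "0 < e" and e4: "e < 1/4"
    and gmin: "\<forall>x. g (-1) \<le> g x" and glin: "\<forall>x\<in>{-1..0}. x + 1 + g (-1) \<le> g x"
  shows "g (-1) + (exp 1 - 1) / (sqrt pi * exp 1) * sqrt e \<le> w (0, 1)"
proof -
  define a where "a = wd e 1"
  have a2: "a = 2 * sqrt e" by (simp add: a_def wd_def)
  have apos: "0 < a" using e by (simp add: a2)
  have "sqrt e < sqrt (1/4)" using e4 by simp
  moreover have "sqrt (1/4::real) = 1/2" by (rule real_sqrt_unique) (auto simp: power2_eq_square)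
  ultimately have a1: "a < 1" by (simp add: a2)
  define K where "K = a / (1 - a)"
  have K0: "0 \<le> K" using apos a1 by (simp add: K_def)
  have Ka0: "K * (1 - a) = a" using a1 by (simp add: K_def)
  have Ka: "K - K * a = a" using Ka0 by (simp add: algebra_simps)
  have Ka2: "K / a = K + 1" using a1 apos by (simp add: K_def field_simps)
  define vm where "vm p = g (-1) + RR e (fst p - snd p + 1) (snd p) + (- (1 + K)) * RR e (fst p - snd p + (1 - a)) (snd p)
      + K * RR e (fst p - snd p + 0) (snd p)" for p :: "real \<times> real"
  have cmp: "vm (0, 1) \<le> w (0, 1)"
    apply (rule comparison[of e])
    subgoal using e by simp
    subgoal using sol by (simp add: visc_solution_def)
    subgoal using sol by (simp add: visc_solution_def)
    subgoal unfolding vm_def[abs_def]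
      by (intro continuous_intros RR_cont_shift[OF e])
    subgoal for b
    proof -
      assume b: "0 < b"
      have tf: "test_fun
          (\<lambda>p. g (-1) + rphi e b 1 p + (- (1 + K)) * rphi e b (1 - a) p + K * rphi e b 0 p)
          (\<lambda>p. 0 + rphix e b 1 p + (- (1 + K)) * rphix e b (1 - a) p + K * rphix e b 0 p)
          (\<lambda>p. 0 + rphit e b 1 p + (- (1 + K)) * rphit e b (1 - a) p + K * rphit e b 0 p)
          (\<lambda>p. 0 + rphixx e b 1 p + (- (1 + K)) * rphixx e b (1 - a) p + K * rphixx e b 0 p)"
        by (intro test_fun_add test_fun_const test_fun_cmult test_fun_ramp b e)
      have "\<forall>p. b \<le> snd p \<longrightarrow>
          g (-1) + rphi e b 1 p + (- (1 + K)) * rphi e b (1 - a) p + K * rphi e b 0 p = vm p \<and>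
          (0 + rphit e b 1 p + (- (1 + K)) * rphit e b (1 - a) p + K * rphit e b 0 p) +
          (0 + rphix e b 1 p + (- (1 + K)) * rphix e b (1 - a) p + K * rphix e b 0 p) -
          e * (0 + rphixx e b 1 p + (- (1 + K)) * rphixx e b (1 - a) p + K * rphixx e b 0 p) \<le> 0"
      proof (intro allI impI conjI)
        fix p :: "real \<times> real" assume bp: "b \<le> snd p"
        show "g (-1) + rphi e b 1 p + (- (1 + K)) * rphi e b (1 - a) p + K * rphi e b 0 p = vm p"
          using rphi_eq[OF b bp] by (simp add: vm_def)
        have t1: "rphit e b 1 p = e * rphixx e b 1 p - rphix e b 1 p" using rphi_pde[OF b bp, of e 1] by simp
        have t2: "rphit e b (1 - a) p = e * rphixx e b (1 - a) p - rphix e b (1 - a) p"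
          using rphi_pde[OF b bp, of e "1 - a"] by simp
        have t3: "rphit e b 0 p = e * rphixx e b 0 p - rphix e b 0 p" using rphi_pde[OF b bp, of e 0] by simp
        show "(0 + rphit e b 1 p + (- (1 + K)) * rphit e b (1 - a) p + K * rphit e b 0 p) +
          (0 + rphix e b 1 p + (- (1 + K)) * rphix e b (1 - a) p + K * rphix e b 0 p) -
          e * (0 + rphixx e b 1 p + (- (1 + K)) * rphixx e b (1 - a) p + K * rphixx e b 0 p) \<le> 0"
          unfolding t1 t2 t3 by (simp add: algebra_simps)
      qed
      with tf show ?thesis by blast
    qed
    subgoal for x
    proof -
      have w0: "w (x, 0) = g x" using sol by (simp add: visc_solution_def)
      have vm0: "vm (x, 0) = g (-1) + max (x + 1) 0 - (1 + K) * max (x + (1 - a)) 0 + K * max x 0"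
        by (simp add: vm_def RR_def algebra_simps)
      have exp1: "(1 + K) * (x + 1 - a) = x + 1 - a + K * x + K - K * a" by (simp add: algebra_simps)
      have "g (-1) + max (x + 1) 0 - (1 + K) * max (x + (1 - a)) 0 + K * max x 0 \<le> g x"
      proof (cases "x < -1")
        case True
        then show ?thesis using gmin apos by (simp add: max_def)
      next
        case False
        note x1 = this
        show ?thesis
        proof (cases "x \<le> a - 1")
          case True
          have "x \<in> {-1..0}" using True x1 a1 by simp
          then have "x + 1 + g (-1) \<le> g x" using glin by blast
          then have "g (-1) + (x + 1) \<le> g x" by simp
          then show ?thesis using True x1 a1 by (simp add: max_def)
        next
          case False
          note x2 = this
          show ?thesis
          proof (cases "x \<le> 0")
            case True
            have "x \<in> {-1..0}" using True x1 by simp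
            then have gx: "x + 1 + g (-1) \<le> g x" using glin by blast
            have nn: "0 \<le> (1 + K) * (x + (1 - a))" using K0 x2 by simp
            have "max (x + 1) 0 = x + 1" "max (x + (1 - a)) 0 = x + (1 - a)" "max x 0 = 0"
              using True x2 a1 apos by auto
            then show ?thesis using nn gx by simp
          next
            case False
            have "max (x + 1) 0 = x + 1" "max (x + (1 - a)) 0 = x + 1 - a" "max x 0 = x"
              using False a1 by auto
            moreover have "g (-1) \<le> g x" using gmin by blast
            ultimately show ?thesis using exp1 Ka by simp
          qed
        qed
      qed
      then show ?thesis using w0 vm0 by simp
    qed
    subgoal
    proof (rule exI[of _ "\<bar>g (-1)\<bar> + (1 + K) * (2 + e)"], intro allI impI)
      fix p :: "real \<times> real" assume sp: "0 \<le> snd p"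
      define n where "n = norm p"
      have fn: "\<bar>fst p\<bar> \<le> n" unfolding n_def using norm_fst_le[of "fst p" "snd p"] by simp
      have sn: "snd p \<le> n" unfolding n_def using norm_snd_le[of "snd p" "fst p"] by simp
      define B where "B = 2 + (2 + e) * n"
      have RB: "RR e (fst p - snd p + d) (snd p) \<le> B" if "\<bar>d\<bar> \<le> 1" for d
      proof -
        have "RR e (fst p - snd p + d) (snd p) \<le> \<bar>fst p - snd p + d\<bar> + 1 + e * snd p"
          by (rule RR_le[OF e sp])
        moreover have "\<bar>fst p - snd p + d\<bar> \<le> n + n + 1" using fn sn sp that by linarith
        moreover have "e * snd p \<le> e * n" using sn e by simp
        ultimately show ?thesis unfolding B_def by (simp add: algebra_simps)
      qed
      have r1: "RR e (fst p - snd p + 1) (snd p) \<le> B" by (rule RB) simp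
      have r3: "RR e (fst p - snd p + 0) (snd p) \<le> B" by (rule RB) simp
      have r2: "0 \<le> RR e (fst p - snd p + (1 - a)) (snd p)" by (rule RR_bound(2)[OF e sp])
      have "vm p \<le> g (-1) + B + 0 + K * B"
        unfolding vm_def
        using r1 mult_left_mono[OF r3 K0] mult_nonneg_nonneg[OF _ r2, of "1 + K"] K0 by (simp add: algebra_simps)
      also have "\<dots> = g (-1) + (1 + K) * B" by (simp add: algebra_simps)
      also have "\<dots> \<le> \<bar>g (-1)\<bar> * (1 + n) + (1 + K) * ((2 + e) * (1 + n))"
      proof -
        have "g (-1) \<le> \<bar>g (-1)\<bar> * (1 + n)" by (rule abs_growth) (simp add: n_def)
        moreover have "B \<le> (2 + e) * (1 + n)" unfolding B_def using e by (simp add: algebra_simps n_def)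
        then have "(1 + K) * B \<le> (1 + K) * ((2 + e) * (1 + n))" using K0 by (intro mult_left_mono) auto
        ultimately show ?thesis by linarith
      qed
      also have "\<dots> = (\<bar>g (-1)\<bar> + (1 + K) * (2 + e)) * (1 + norm p)" by (simp add: algebra_simps n_def)
      finally show "vm p \<le> (\<bar>g (-1)\<bar> + (1 + K) * (2 + e)) * (1 + norm p)" .
    qed
    subgoal by simp
    done
  define G0 where "G0 = gG 0"
  define G1 where "G1 = gG (-1)"
  define G2 where "G2 = gG (-1 / a)"
  define N1 where "N1 = gN (-1)"
  have RRa: "RR e z 1 = a * gG (z / a)" for z by (simp add: RR_def Wf_def a_def)
  have val: "vm (0, 1) = g (-1) + a * G0 + (- (1 + K)) * (a * G1) + K * (a * G2)"
    unfolding vm_def using apos by (simp add: RRa G0_def G1_def G2_def)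
  have hG0: "G0 = 1 / (2 * sqrt pi)" by (simp add: G0_def gG_def)
  have hG1: "G1 = - N1 + exp (- 1) / (2 * sqrt pi)" by (simp add: G1_def gG_def N1_def)
  have mvt: "G1 + N1 \<le> G2 - (- 1 / a) * N1"
    unfolding G1_def G2_def N1_def using apos a1 by (intro gG_mvt) (simp add: field_simps)
  have KG2: "K * G1 - N1 \<le> K * G2"
  proof -
    have "K * (G1 + N1) \<le> K * (G2 - (- 1 / a) * N1)" using mvt K0 by (rule mult_left_mono)
    moreover have "K * (G2 - (- 1 / a) * N1) = K * G2 + (K / a) * N1" by (simp add: algebra_simps)
    ultimately show ?thesis unfolding Ka2 by (simp add: algebra_simps)
  qed
  have "G0 + (- (1 + K)) * G1 + K * G2 \<ge> (1 - exp (- 1)) / (2 * sqrt pi)"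
  proof -
    have eq1: "(1 - exp (- 1)) / (2 * sqrt pi) = 1 / (2 * sqrt pi) - exp (- 1) / (2 * sqrt pi)"
      by (simp add: diff_divide_distrib)
    have eq2: "G0 + (- (1 + K)) * G1 + K * G2 = G0 - G1 + (K * G2 - K * G1)" by (simp add: algebra_simps)
    show ?thesis unfolding eq1 eq2 using KG2 hG0 hG1 by linarith
  qed
  then have "a * ((1 - exp (- 1)) / (2 * sqrt pi)) \<le> a * (G0 + (- (1 + K)) * G1 + K * G2)"
    using apos by (intro mult_left_mono) auto
  moreover have "a * ((1 - exp (- 1)) / (2 * sqrt pi)) = (exp 1 - 1) / (sqrt pi * exp 1) * sqrt e"
    unfolding a2 by (simp add: exp_minus field_simps)
  ultimately have "g (-1) + (exp 1 - 1) / (sqrt pi * exp 1) * sqrt e \<le> vm (0, 1)"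
    unfolding val by (simp add: algebra_simps)
  then show ?thesis using cmp by simp
qed


theorem proposition4p1:
  fixes g :: "real \<Rightarrow> real"
    and ueps :: "real \<Rightarrow> real \<times> real \<Rightarrow> real"
    and u :: "real \<times> real \<Rightarrow> real"
  assumes lip: "\<exists>L. L-lipschitz_on UNIV g"
    and g_min: "\<forall>x. g x \<ge> g (-1)"
    and g_lin: "\<forall>x\<in>{-1..0}. g x \<ge> x + 1 + g (-1)"
    and ueps_sol: "\<forall>eps>0. visc_solution eps g (ueps eps)"
    and u_sol: "visc_solution 0 g u"
  shows "\<forall>eps. 0 < eps \<and> eps < 1/4 \<longrightarrow>
           \<bar>ueps eps (0, 1) - u (0, 1)\<bar> = ueps eps (0, 1) - g (-1) \<and>
           ueps eps (0, 1) - g (-1) \<ge> (exp 1 - 1) / (sqrt pi * exp 1) * sqrt eps"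
proof (intro allI impI)
  fix eps :: real
  assume h: "0 < eps \<and> eps < 1/4"
  obtain L where L: "L-lipschitz_on UNIV g" using lip by blast
  have u1: "g (-1) \<le> u (0, 1)" by (rule u_lower[OF u_sol _ g_min]) simp
  have u2: "u (0, 1) \<le> g (-1)" by (rule u_upper[OF u_sol L])
  have u0: "u (0, 1) = g (-1)" using u1 u2 by simp
  have sol: "visc_solution eps g (ueps eps)" using ueps_sol h by blast
  have low: "g (-1) + (exp 1 - 1) / (sqrt pi * exp 1) * sqrt eps \<le> ueps eps (0, 1)"
    using ueps_lower[OF sol _ _ g_min g_lin] h by simp
  have "0 \<le> (exp 1 - 1) / (sqrt pi * exp 1) * sqrt eps"
  proof -
    have "1 \<le> exp (1::real)" by simp
    then show ?thesis using h by simp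
  qed
  then show "\<bar>ueps eps (0, 1) - u (0, 1)\<bar> = ueps eps (0, 1) - g (-1) \<and>
           ueps eps (0, 1) - g (-1) \<ge> (exp 1 - 1) / (sqrt pi * exp 1) * sqrt eps"
    using low u0 by auto
qed

end
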